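(* Let $p>2$ be a prime and let $V'=\{\mathbf{v}\in\{\pm1\}^{4p} : \mathbf{v}_{4p}=1,\ \sum_{i=1}^{4p}\mathbf{v}_i=0\}$. If $S\subseteq V'$ contains no two (distinct) vectors $\mathbf{u},\mathbf{v}$ with $\langle\mathbf{u},\mathbf{v}\rangle=0$, then $|S|\le \sum_{k=0}^{p-1}\binom{4p}{k}\le 2\binom{4p}{p-1}$.
   Context: $\langle\cdot,\cdot\rangle$ is the standard inner product on $\mathbb{R}^{4p}$. *)

theory Defs
  imports "HOL-Computational_Algebra.Primes"
begin

text \<open>Vectors in {+-1}^n are represented as functions nat => int; coordinate i (1-based)
  of the paper is the value at index i-1, for i-1 < n; outside {0..<n} the value is 0
  (extensional representation, so the set is finite).\<close>

definition pm1_vecs :: "nat \<Rightarrow> (nat \<Rightarrow> int) set" where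
  "pm1_vecs n = {v. (\<forall>i<n. v i = 1 \<or> v i = -1) \<and> (\<forall>i\<ge>n. v i = 0)}"

definition ip :: "nat \<Rightarrow> (nat \<Rightarrow> int) \<Rightarrow> (nat \<Rightarrow> int) \<Rightarrow> int" where
  "ip n u v = (\<Sum>i<n. u i * v i)"

definition Vprime :: "nat \<Rightarrow> (nat \<Rightarrow> int) set" where
  "Vprime p = {v \<in> pm1_vecs (4*p). v (4*p - 1) = 1 \<and> (\<Sum>i<4*p. v i) = 0}"

end

theory Submission
  imports Defs "HOL-Number_Theory.Cong" "Jordan_Normal_Form.Determinant"
begin

lemma alt_binom:
  fixes x :: nat assumes "x \<ge> 1"
  shows "int ((x-1) choose m) = (\<Sum>j\<le>m. (-1)^(m-j) * int (x choose j))"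
proof (induction m)
  case 0 then show ?case by simp
next
  case (Suc m)
  obtain y where y: "x = Suc y" using assms by (cases x) auto
  have "int (y choose Suc m) = int (x choose Suc m) - int (y choose m)"
    using y by simp
  also have "\<dots> = int (x choose Suc m) - (\<Sum>j\<le>m. (-1)^(m-j) * int (x choose j))"
    using Suc y by simp
  also have "\<dots> = (\<Sum>j\<le>Suc m. (-1)^(Suc m-j) * int (x choose j))"
  proof -
    have "(\<Sum>j\<le>m. (-1)^(Suc m-j) * int (x choose j)) = (\<Sum>j\<le>m. - ((-1)^(m-j) * int (x choose j)))"
      by (rule sum.cong) (auto simp: Suc_diff_le)
    also have "\<dots> = - (\<Sum>j\<le>m. (-1)^(m-j) * int (x choose j))" by (rule sum_negf)
    finally show ?thesis by simp
  qed
  finally show ?case using y by simp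
qed

lemma sum_subsets:
  assumes "finite X" "card X \<ge> 1"
  shows "(\<Sum>T\<in>{T. T \<subseteq> X \<and> card T \<le> m}. (-1::int)^(m - card T)) = int ((card X - 1) choose m)"
proof -
  have fin: "finite {T. T \<subseteq> X \<and> card T \<le> m}"
    by (rule finite_subset[of _ "Pow X"]) (auto simp: assms(1))
  have "(\<Sum>T\<in>{T. T \<subseteq> X \<and> card T \<le> m}. (-1::int)^(m - card T)) =
     (\<Sum>j\<le>m. \<Sum>T\<in>{T. T \<in> {T. T \<subseteq> X \<and> card T \<le> m} \<and> card T = j}. (-1::int)^(m - card T))"
    by (rule sum.group[symmetric]) (auto simp: fin)
  also have "\<dots> = (\<Sum>j\<le>m. (-1)^(m-j) * int (card X choose j))"
  proof (rule sum.cong[OF refl])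
    fix j assume "j \<in> {..m}"
    then have e: "{T. T \<in> {T. T \<subseteq> X \<and> card T \<le> m} \<and> card T = j} = {T. T \<subseteq> X \<and> card T = j}" by auto
    show "(\<Sum>T\<in>{T. T \<in> {T. T \<subseteq> X \<and> card T \<le> m} \<and> card T = j}. (-1::int)^(m - card T)) = (-1)^(m-j) * int (card X choose j)"
      unfolding e by (simp add: n_subsets[OF assms(1)])
  qed
  also have "\<dots> = int ((card X - 1) choose m)" using alt_binom assms(2) by simp
  finally show ?thesis .
qed

lemma choose_cong1:
  assumes "prime (p::nat)" "j < p"
  shows "[(p + j) choose j = 1] (mod p)"
  using assms(2)
proof (induction j)
  case 0 then show ?case by simp
next
  case (Suc j)
  have IH: "[(p + j) choose j = 1] (mod p)" using Suc by simp
  have eq: "Suc (p+j) * ((p + j) choose j) = (Suc (p+j) choose Suc j) * Suc j"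
    by (rule Suc_times_binomial_eq)
  have "[Suc (p+j) * ((p + j) choose j) = Suc j * 1] (mod p)"
  proof -
    have "[Suc (p+j) = Suc j] (mod p)" unfolding cong_def by (metis add_Suc_right mod_add_self1)
    then show ?thesis using IH cong_mult by blast
  qed
  then have "[(Suc (p+j) choose Suc j) * Suc j = 1 * Suc j] (mod p)" using eq by (simp only: mult_1 mult.commute)
  moreover have "coprime (Suc j) p"
  proof -
    have "\<not> p dvd Suc j" using Suc.prems by (auto dest: dvd_imp_le)
    then have "coprime p (Suc j)" using assms(1) prime_imp_coprime by blast
    then show ?thesis by (simp add: coprime_commute)
  qed
  ultimately have "[(Suc (p+j) choose Suc j) = 1] (mod p)" using cong_mult_rcancel_nat by (simp del: mult_Suc_right mult_Suc)
  then show ?case by (metis add_Suc_right)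
qed


lemma ratio: "(n - k) * (n choose k) = Suc k * (n choose Suc k)"
  using binomial_absorb_comp[of n k] binomial_absorption[of k n] by simp

lemma binsum_aux:
  fixes p :: nat assumes "m \<le> p - 1" "p \<ge> 1"
  shows "(\<Sum>k\<le>m. (4*p) choose k) \<le> 2 * ((4*p) choose m)"
  using assms(1)
proof (induction m)
  case 0 then show ?case by simp
next
  case (Suc m)
  have r: "(4*p - m) * ((4*p) choose m) = Suc m * ((4*p) choose Suc m)" by (rule ratio)
  have "2 * Suc m \<le> 4*p - m" using Suc.prems by (simp add: le_diff_conv2)
  then have "2 * Suc m * ((4*p) choose m) \<le> (4*p - m) * ((4*p) choose m)" by (rule mult_right_mono) simp
  then have "Suc m * (2 * ((4*p) choose m)) \<le> Suc m * ((4*p) choose Suc m)" using r by (simp add: ac_simps)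
  then have "2 * ((4*p) choose m) \<le> (4*p) choose Suc m" by (rule mult_left_le_imp_le) simp
  then show ?case using Suc by simp
qed

lemma binsum:
  fixes p :: nat assumes "p \<ge> 1"
  shows "(\<Sum>k<p. (4*p) choose k) \<le> 2 * ((4*p) choose (p-1))"
proof -
  have "{..<p} = {..p-1}" using assms by auto
  then show ?thesis using binsum_aux[of "p-1" p] assms by simp
qed

lemma offdiag_dvd:
  fixes p x :: nat assumes "prime p" "1 \<le> x" "x < 2*p" "x \<noteq> p"
  shows "p dvd ((x-1) choose (p-1))"
proof (cases "x - 1 < p - 1")
  case True then show ?thesis by (simp add: binomial_eq_0)
next
  case False
  define m where "m = x - 1"
  have m: "p \<le> m" "m - (p-1) < p" using False assms unfolding m_def by auto
  have e: "fact (p-1) * fact (m - (p-1)) * (m choose (p-1)) = (fact m :: nat)"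
    by (rule binomial_fact_lemma) (use m in auto)
  have "p dvd fact m" using prime_dvd_fact_iff[OF assms(1)] m by simp
  moreover have "\<not> p dvd fact (p-1)" using prime_dvd_fact_iff[OF assms(1)] prime_gt_0_nat[OF assms(1)]
    by simp
  moreover have "\<not> p dvd fact (m - (p-1))" using prime_dvd_fact_iff[OF assms(1)] m by simp
  ultimately show ?thesis using e assms(1) unfolding m_def
    by (metis prime_dvd_mult_iff)
qed

lemma diag_ndvd:
  fixes p :: nat assumes "prime p"
  shows "\<not> p dvd ((2*p-1) choose (p-1))"
proof -
  have p1: "p > 1" using assms prime_gt_1_nat by blast
  have "[(p + (p-1)) choose (p-1) = 1] (mod p)" by (rule choose_cong1) (use assms p1 in auto)
  moreover have "p + (p-1) = 2*p-1" using p1 by simp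
  ultimately have "[(2*p-1) choose (p-1) = 1] (mod p)" by simp
  then have "((2*p-1) choose (p-1)) mod p = 1" using p1 by (simp add: cong_def)
  then show ?thesis by (simp add: dvd_eq_mod_eq_0)
qed


definition Aset :: "nat \<Rightarrow> (nat \<Rightarrow> int) \<Rightarrow> nat set" where
  "Aset n v = {i. i < n \<and> v i = 1}"

lemma Aset_sub: "Aset n v \<subseteq> {..<n}" by (auto simp: Aset_def)

lemma Aset_fin: "finite (Aset n v)" using Aset_sub finite_subset by blast

lemma pm1_decomp: "v \<in> pm1_vecs n \<Longrightarrow> i < n \<Longrightarrow> v i = 2 * of_bool (i \<in> Aset n v) - 1"
  by (auto simp: pm1_vecs_def Aset_def)

lemma sum_pm1:
  assumes v: "v \<in> pm1_vecs n"
  shows "(\<Sum>i<n. v i) = 2 * int (card (Aset n v)) - int n"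
proof -
  have "(\<Sum>i<n. v i) = (\<Sum>i<n. 2 * of_bool (i \<in> Aset n v) - 1)"
    using pm1_decomp[OF v] by (intro sum.cong) auto
  also have "\<dots> = 2 * (\<Sum>i<n. of_bool (i \<in> Aset n v)) - int n"
    by (simp add: sum_subtractf sum_distrib_left)
  also have "{..<n} \<inter> {x. x \<in> Aset n v} = Aset n v" using Aset_sub by auto
  then have "(\<Sum>i<n. of_bool (i \<in> Aset n v) :: int) = int (card (Aset n v))"
    by simp
  finally show ?thesis .
qed

lemma ip_pm1:
  assumes u: "u \<in> pm1_vecs n" and v: "v \<in> pm1_vecs n"
  shows "ip n u v = 4 * int (card (Aset n u \<inter> Aset n v)) - 2 * int (card (Aset n u))
      - 2 * int (card (Aset n v)) + int n"
proof -
  have "ip n u v = (\<Sum>i<n. 4 * of_bool (i \<in> Aset n u \<inter> Aset n v) - 2 * of_bool (i \<in> Aset n u)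
      - 2 * of_bool (i \<in> Aset n v) + 1)"
    unfolding ip_def
  proof (intro sum.cong refl)
    fix i assume "i \<in> {..<n}"
    then have i: "i < n" by simp
    show "u i * v i = 4 * of_bool (i \<in> Aset n u \<inter> Aset n v) - 2 * of_bool (i \<in> Aset n u)
      - 2 * of_bool (i \<in> Aset n v) + 1"
      unfolding pm1_decomp[OF u i] pm1_decomp[OF v i] by (auto simp: algebra_simps)
  qed
  also have "\<dots> = 4 * (\<Sum>i<n. of_bool (i \<in> Aset n u \<inter> Aset n v)) - 2 * (\<Sum>i<n. of_bool (i \<in> Aset n u))
      - 2 * (\<Sum>i<n. of_bool (i \<in> Aset n v)) + int n"
    by (simp add: sum.distrib sum_subtractf sum_distrib_left)
  also have "{..<n} \<inter> {x. x \<in> Aset n u \<inter> Aset n v} = Aset n u \<inter> Aset n v" using Aset_sub by auto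
  moreover have "{..<n} \<inter> {x. x \<in> Aset n u} = Aset n u" using Aset_sub by auto
  moreover have "{..<n} \<inter> {x. x \<in> Aset n v} = Aset n v" using Aset_sub by auto
  ultimately show ?thesis by simp
qed

lemma Aset_inj:
  assumes u: "u \<in> pm1_vecs n" and v: "v \<in> pm1_vecs n" and e: "Aset n u = Aset n v"
  shows "u = v"
proof
  fix i show "u i = v i"
  proof (cases "i < n")
    case True then show ?thesis using pm1_decomp[OF u True] pm1_decomp[OF v True] e by simp
  next
    case False then show ?thesis using u v by (simp add: pm1_vecs_def)
  qed
qed

lemma card_Ts:
  "card {T. T \<subseteq> {..<n} \<and> card T < p} = (\<Sum>k<p. n choose k)"
proof -
  have fin: "finite {T. T \<subseteq> {..<n} \<and> card T < p}"
    by (rule finite_subset[of _ "Pow {..<n}"]) auto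
  have "card {T. T \<subseteq> {..<n} \<and> card T < p} = (\<Sum>T\<in>{T. T \<subseteq> {..<n} \<and> card T < p}. 1)" by simp
  also have "\<dots> = (\<Sum>k<p. \<Sum>T\<in>{T. T \<in> {T. T \<subseteq> {..<n} \<and> card T < p} \<and> card T = k}. 1)"
    by (rule sum.group[symmetric]) (auto simp: fin)
  also have "\<dots> = (\<Sum>k<p. n choose k)"
  proof (rule sum.cong[OF refl])
    fix k assume "k \<in> {..<p}"
    then have e: "{T. T \<in> {T. T \<subseteq> {..<n} \<and> card T < p} \<and> card T = k} = {T. T \<subseteq> {..<n} \<and> card T = k}" by auto
    show "(\<Sum>T\<in>{T. T \<in> {T. T \<subseteq> {..<n} \<and> card T < p} \<and> card T = k}. 1) = n choose k"
      unfolding e using n_subsets[OF finite_lessThan[of n], of k] by simp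
  qed
  finally show ?thesis .
qed



lemma key_entry:
  fixes n :: nat and X :: "nat set"
  assumes "finite X" "X \<subseteq> {..<n}" "card X \<ge> 1" "p \<ge> 1"
  shows "(\<Sum>T\<in>{T. T \<subseteq> {..<n} \<and> card T < p}. (if T \<subseteq> X then (-1::int)^(p-1-card T) else 0))
     = int ((card X - 1) choose (p-1))"
proof -
  have fin: "finite {T. T \<subseteq> {..<n} \<and> card T < p}"
    by (rule finite_subset[of _ "Pow {..<n}"]) auto
  have "(\<Sum>T\<in>{T. T \<subseteq> {..<n} \<and> card T < p}. (if T \<subseteq> X then (-1::int)^(p-1-card T) else 0))
     = (\<Sum>T\<in>{T\<in>{T. T \<subseteq> {..<n} \<and> card T < p}. T \<subseteq> X}. (-1::int)^(p-1-card T))"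
    by (rule sum.inter_filter[symmetric, OF fin])
  also have "{T\<in>{T. T \<subseteq> {..<n} \<and> card T < p}. T \<subseteq> X} = {T. T \<subseteq> X \<and> card T \<le> p-1}"
    using assms by auto
  also have "(\<Sum>T\<in>{T. T \<subseteq> X \<and> card T \<le> p-1}. (-1::int)^(p-1-card T)) = int ((card X - 1) choose (p-1))"
    by (rule sum_subsets) (use assms in auto)
  finally show ?thesis .
qed

theorem mainTheorem4:
  fixes p :: nat and S :: "(nat \<Rightarrow> int) set"
  assumes "prime p" and "p > 2"
    and "S \<subseteq> Vprime p"
    and "\<forall>u\<in>S. \<forall>v\<in>S. u \<noteq> v \<longrightarrow> ip (4*p) u v \<noteq> 0"
  shows "card S \<le> (\<Sum>k<p. (4*p) choose k) \<and> (\<Sum>k<p. (4*p) choose k) \<le> 2 * ((4*p) choose (p - 1))"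
proof -
  have p1: "p \<ge> 1" using assms(2) by simp
  have part2: "(\<Sum>k<p. (4*p) choose k) \<le> 2 * ((4*p) choose (p - 1))" by (rule binsum[OF p1])
  have part1: "card S \<le> (\<Sum>k<p. (4*p) choose k)"
  proof (cases "finite S")
    case False then show ?thesis by simp
  next
    case finS: True
    define n where "n = 4*p"
    define A where "A = Aset n"
    define Ts where "Ts = {T. T \<subseteq> {..<n} \<and> card T < p}"
    define N where "N = card Ts"
    have N: "N = (\<Sum>k<p. (4*p) choose k)" unfolding N_def Ts_def n_def by (rule card_Ts)
    have finTs: "finite Ts" unfolding Ts_def by (rule finite_subset[of _ "Pow {..<n}"]) auto
    have pm: "\<And>u. u \<in> S \<Longrightarrow> u \<in> pm1_vecs n" using assms(3) by (auto simp: Vprime_def n_def)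
    have cardA: "card (A u) = 2*p" if u: "u \<in> S" for u
    proof -
      have "(\<Sum>i<n. u i) = 0" using assms(3) u by (auto simp: Vprime_def n_def)
      then have "2 * int (card (A u)) - int n = 0" using sum_pm1[OF pm[OF u]] by (simp add: A_def)
      then show "card (A u) = 2*p" unfolding n_def by simp
    qed
    have last: "\<And>u. u \<in> S \<Longrightarrow> n - 1 \<in> A u" using assms(3) p1 by (auto simp: Vprime_def n_def A_def Aset_def)
    define x where "x u v = card (A u \<inter> A v)" for u v
    have x1: "1 \<le> x u v" if "u \<in> S" "v \<in> S" for u v
    proof -
      have "n - 1 \<in> A u \<inter> A v" using last that by auto
      moreover have "finite (A u \<inter> A v)" by (simp add: A_def Aset_fin)
      ultimately show "1 \<le> x u v" unfolding x_def by (metis One_nat_def Suc_leI card_gt_0_iff empty_iff)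
    qed
    have xdiag: "\<And>u. u \<in> S \<Longrightarrow> x u u = 2*p" using cardA by (simp add: x_def)
    have xoff: "x u v < 2*p \<and> x u v \<noteq> p" if u: "u \<in> S" and v: "v \<in> S" and uv: "u \<noteq> v" for u v
    proof -
      have "ip n u v \<noteq> 0" using assms(4) u v uv by (simp add: n_def)
      then have "x u v \<noteq> p" using ip_pm1[OF pm[OF u] pm[OF v]] cardA[OF u] cardA[OF v]
        by (simp add: x_def A_def n_def)
      moreover have "x u v \<le> 2*p" using cardA[OF u] card_mono[of "A u" "A u \<inter> A v"]
        by (simp add: x_def A_def Aset_fin)
      moreover have "x u v \<noteq> 2*p"
      proof
        assume h: "x u v = 2*p"
        have "A u \<inter> A v = A u" using card_subset_eq[of "A u" "A u \<inter> A v"] h cardA[OF u]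
          by (simp add: x_def A_def Aset_fin)
        moreover have "A u \<inter> A v = A v" using card_subset_eq[of "A v" "A u \<inter> A v"] h cardA[OF v]
          by (simp add: x_def A_def Aset_fin)
        ultimately have "A u = A v" by simp
        then show False using Aset_inj[OF pm[OF u] pm[OF v]] uv by (simp add: A_def)
      qed
      ultimately show "x u v < 2*p \<and> x u v \<noteq> p" by simp
    qed
    define M where "M u v = int ((x u v - 1) choose (p-1))" for u v
    have Moff: "int p dvd M u v" if "u \<in> S" "v \<in> S" "u \<noteq> v" for u v
    proof -
      have "p dvd ((x u v - 1) choose (p-1))"
        using offdiag_dvd[OF assms(1)] x1[OF that(1,2)] xoff[OF that] by simp
      then show ?thesis unfolding M_def by simp
    qed
    define Cc where "Cc u T = (if T \<subseteq> A u then (-1::int)^(p-1-card T) else 0)" for u T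
    define Wc where "Wc T v = (of_bool (T \<subseteq> A v) :: int)" for T v
    have Mfac: "(\<Sum>T\<in>Ts. Cc u T * Wc T v) = M u v" if u: "u \<in> S" and v: "v \<in> S" for u v
    proof -
      have "(\<Sum>T\<in>Ts. Cc u T * Wc T v) = (\<Sum>T\<in>Ts. (if T \<subseteq> A u \<inter> A v then (-1::int)^(p-1-card T) else 0))"
        by (rule sum.cong) (auto simp: Cc_def Wc_def)
      also have "\<dots> = M u v" unfolding M_def x_def Ts_def
        by (rule key_entry) (use x1[OF u v] Aset_sub p1 in \<open>auto simp: x_def A_def Aset_fin\<close>)
      finally show ?thesis .
    qed
    show ?thesis
    proof (rule ccontr)
      assume "\<not> ?thesis"
      then have lt: "N < card S" using N by simp
      define m where "m = card S"
      obtain s where s: "bij_betw s {0..<m} S" using ex_bij_betw_nat_finite[OF finS] m_def by blast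
      obtain t where t: "bij_betw t {0..<N} Ts" using ex_bij_betw_nat_finite[OF finTs] N_def by blast
      define Cm where "Cm = mat m m (\<lambda>(i,k). if k < N then Cc (s i) (t k) else 0)"
      define Wm where "Wm = mat m m (\<lambda>(k,j). if k < N then Wc (t k) (s j) else 0)"
      define D where "D = Cm * Wm"
      have Cm: "Cm \<in> carrier_mat m m" and Wm: "Wm \<in> carrier_mat m m" by (simp_all add: Cm_def Wm_def)
      have D: "D \<in> carrier_mat m m" using Cm Wm by (simp add: D_def)
      have sS: "\<And>i. i < m \<Longrightarrow> s i \<in> S" using s by (auto simp: bij_betw_def)
      have Dent: "D $$ (i,j) = M (s i) (s j)" if i: "i < m" and j: "j < m" for i j
      proof -
        have "D $$ (i,j) = (\<Sum>k\<in>{0..<m}. Cm $$ (i,k) * Wm $$ (k,j))"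
          using i j Cm Wm by (simp add: D_def scalar_prod_def)
        also have "\<dots> = (\<Sum>k\<in>{0..<m}. if k < N then Cc (s i) (t k) * Wc (t k) (s j) else 0)"
          using i j by (intro sum.cong) (auto simp: Cm_def Wm_def)
        also have "\<dots> = (\<Sum>k\<in>{0..<N}. Cc (s i) (t k) * Wc (t k) (s j))"
        proof -
          have "(\<Sum>k\<in>{0..<m}. if k < N then Cc (s i) (t k) * Wc (t k) (s j) else 0)
              = (\<Sum>k\<in>{k \<in> {0..<m}. k < N}. Cc (s i) (t k) * Wc (t k) (s j))"
            by (rule sum.inter_filter[symmetric]) simp
          also have "{k \<in> {0..<m}. k < N} = {0..<N}" using lt m_def by auto
          finally show ?thesis .
        qed
        also have "\<dots> = (\<Sum>T\<in>Ts. Cc (s i) T * Wc T (s j))"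
          by (rule sum.reindex_bij_betw[OF t])
        also have "\<dots> = M (s i) (s j)" by (rule Mfac[OF sS[OF i] sS[OF j]])
        finally show ?thesis .
      qed
      have "det Wm = 0"
      proof -
        have "det Wm = (\<Sum>\<sigma>\<in>{\<sigma>. \<sigma> permutes {0..<m}}. signof \<sigma> * (\<Prod>i=0..<m. Wm $$ (i, \<sigma> i)))"
          by (rule det_def'[OF Wm])
        also have "\<dots> = 0"
        proof (rule sum.neutral, rule ballI)
          fix \<sigma> assume "\<sigma> \<in> {\<sigma>. \<sigma> permutes {0..<m}}"
          then have \<sigma>: "\<sigma> permutes {0..<m}" by simp
          have "\<sigma> N < m" using permutes_in_image[OF \<sigma>] lt m_def by auto
          then have "Wm $$ (N, \<sigma> N) = 0" using lt m_def by (simp add: Wm_def)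
          moreover have "N \<in> {0..<m}" using lt m_def by simp
          ultimately have "(\<Prod>i=0..<m. Wm $$ (i, \<sigma> i)) = 0"
            by (metis (no_types, lifting) finite_atLeastLessThan prod_zero)
          then show "signof \<sigma> * (\<Prod>i=0..<m. Wm $$ (i, \<sigma> i)) = 0" by simp
        qed
        finally show ?thesis .
      qed
      then have det0: "det D = 0" using det_mult[OF Cm Wm] by (simp add: D_def)
      define c where "c = (2*p-1) choose (p-1)"
      have diagD: "D $$ (i,i) = int c" if "i < m" for i
        using Dent[OF that that] xdiag[OF sS[OF that]] by (simp add: M_def c_def)
      have "int p dvd det D - (\<Prod>i=0..<m. D $$ (i,i))"
      proof -
        let ?P = "{\<sigma>. \<sigma> permutes {0..<m}}"
        have idP: "id \<in> ?P" by (simp add: permutes_id)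
        have finP: "finite ?P" by (simp add: finite_permutations)
        have "det D = (\<Sum>\<sigma>\<in>?P. signof \<sigma> * (\<Prod>i=0..<m. D $$ (i, \<sigma> i)))" by (rule det_def'[OF D])
        also have "\<dots> = signof id * (\<Prod>i=0..<m. D $$ (i, id i)) + (\<Sum>\<sigma>\<in>?P - {id}. signof \<sigma> * (\<Prod>i=0..<m. D $$ (i, \<sigma> i)))"
          by (rule sum.remove[OF finP idP])
        finally have e: "det D - (\<Prod>i=0..<m. D $$ (i,i)) = (\<Sum>\<sigma>\<in>?P - {id}. signof \<sigma> * (\<Prod>i=0..<m. D $$ (i, \<sigma> i)))"
          by simp
        have "int p dvd (\<Sum>\<sigma>\<in>?P - {id}. signof \<sigma> * (\<Prod>i=0..<m. D $$ (i, \<sigma> i)))"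
        proof (rule dvd_sum)
          fix \<sigma> assume "\<sigma> \<in> ?P - {id}"
          then have \<sigma>: "\<sigma> permutes {0..<m}" "\<sigma> \<noteq> id" by auto
          obtain i where i: "\<sigma> i \<noteq> i" using \<sigma>(2) by (metis eq_id_iff)
          have im: "i < m" using permutes_not_in[OF \<sigma>(1)] i by fastforce
          have sim: "\<sigma> i < m" using permutes_in_image[OF \<sigma>(1)] im by simp
          have "s i \<noteq> s (\<sigma> i)" using s im sim i by (metis atLeastLessThan_iff bij_betw_iff_bijections zero_le)
          then have "int p dvd D $$ (i, \<sigma> i)" using Dent[OF im sim] Moff sS im sim by simp
          moreover have "D $$ (i, \<sigma> i) dvd (\<Prod>i=0..<m. D $$ (i, \<sigma> i))"
            by (rule dvd_prodI) (use im in auto)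
          ultimately have "int p dvd (\<Prod>i=0..<m. D $$ (i, \<sigma> i))" by (rule dvd_trans)
          then show "int p dvd signof \<sigma> * (\<Prod>i=0..<m. D $$ (i, \<sigma> i))" by simp
        qed
        with e show ?thesis by simp
      qed
      moreover have "(\<Prod>i=0..<m. D $$ (i,i)) = int (c ^ m)"
      proof -
        have "(\<Prod>i=0..<m. D $$ (i,i)) = (\<Prod>i=0..<m. int c)" by (rule prod.cong) (auto simp: diagD)
        then show ?thesis by simp
      qed
      ultimately have "int p dvd int (c^m)" using det0 by simp
      then have "p dvd c ^ m" by (simp only: of_nat_dvd_iff)
      then have "p dvd c" using prime_dvd_power[OF assms(1)] by blast
      then show False using diag_ndvd[OF assms(1)] c_def by simp
    qed
  qed
  show ?thesis using part1 part2 by simp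
qed

end
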